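(* Let $p\geq 5$ be a prime and let $t$ be the unique integer with $1\leq t\leq p-1$ such that $24t+1\equiv 0\pmod p$. Then for all $n\geq 0$, $d_{p-2}(pn+t)\equiv 0\pmod p$.
   Context: For each integer $k\geq 1$, the numbers $d_k(n)$ are defined by $\sum_{n\geq 0} d_k(n)q^n = \frac{f_2^k}{f_1^{3k+1}}$, where $f_r = \prod_{i\geq 1}(1-q^{ri})$. *)

theory Defs
  imports "HOL-Computational_Algebra.Formal_Power_Series"
begin

(* Truncation of f_r = prod_{i>=1} (1 - q^(r i)) to factors i = 1..N.
   Factors with r*i > N do not affect coefficients of index <= N. *)
definition f_trunc :: "nat \<Rightarrow> nat \<Rightarrow> rat fps" where
  "f_trunc N r = (\<Prod>i\<in>{1..N}. 1 - fps_X ^ (r * i))"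

definition d :: "nat \<Rightarrow> nat \<Rightarrow> rat" where
  "d k n = fps_nth (f_trunc n 2 ^ k * inverse (f_trunc n 1 ^ (3 * k + 1))) n"

end

theory Submission
  imports Defs "HOL-Computational_Algebra.Primes"
begin
unbundle fps_syntax

definition eqN :: "nat \<Rightarrow> 'a::comm_ring_1 fps \<Rightarrow> 'a fps \<Rightarrow> bool" where
  "eqN N f g \<longleftrightarrow> (\<forall>i\<le>N. f$i = g$i)"

lemma eqN_refl[simp]: "eqN N f f" by (simp add: eqN_def)
lemma eqN_sym: "eqN N f g \<Longrightarrow> eqN N g f" by (simp add: eqN_def)
lemma eqN_trans[trans]: "eqN N f g \<Longrightarrow> eqN N g h \<Longrightarrow> eqN N f h" by (simp add: eqN_def)
lemma eqN_add: "eqN N f g \<Longrightarrow> eqN N f' g' \<Longrightarrow> eqN N (f+f') (g+g')" by (simp add: eqN_def)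
lemma eqN_diff: "eqN N f g \<Longrightarrow> eqN N f' g' \<Longrightarrow> eqN N (f-f') (g-g')" by (simp add: eqN_def)
lemma eqN_uminus: "eqN N f g \<Longrightarrow> eqN N (-f) (-g)" by (simp add: eqN_def)
lemma eqN_mult: "eqN N f g \<Longrightarrow> eqN N f' g' \<Longrightarrow> eqN N (f*f') (g*g')"
  unfolding eqN_def fps_mult_nth by (auto intro!: sum.cong)
lemma eqN_prod: "(\<And>i. i\<in>S \<Longrightarrow> eqN N (f i) (g i)) \<Longrightarrow> eqN N (prod f S) (prod g S)"
  by (induction S rule: infinite_finite_induct) (auto intro: eqN_mult)
lemma eqN_sum: "(\<And>i. i\<in>S \<Longrightarrow> eqN N (f i) (g i)) \<Longrightarrow> eqN N (sum f S) (sum g S)"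
  by (induction S rule: infinite_finite_induct) (auto intro: eqN_add)
lemma eqN_power: "eqN N f g \<Longrightarrow> eqN N (f^k) (g^k)"
  by (induction k) (auto intro: eqN_mult)
lemma eqN_X_high: "N < a \<Longrightarrow> eqN N (fps_X^a * f) 0"
  by (simp add: eqN_def fps_X_power_mult_nth)
lemma eqN_cancel:
  assumes "f$0 = 1" "eqN N (f*h) 0" shows "eqN N h 0"
proof -
  have "h$i = 0" if "i \<le> N" for i
    using that
  proof (induction i rule: less_induct)
    case (less i)
    have "(f*h)$i = (\<Sum>j=0..i. f$j * h$(i-j))" by (rule fps_mult_nth)
    also have "\<dots> = f$0 * h$i + (\<Sum>j=1..i. f$j * h$(i-j))"
      by (simp add: sum.atLeast_Suc_atMost)
    also have "(\<Sum>j=1..i. f$j * h$(i-j)) = 0"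
      using less by (intro sum.neutral) auto
    finally show ?case using assms less.prems unfolding eqN_def by simp
  qed
  thus ?thesis by (simp add: eqN_def)
qed
lemma eqN_cancel_mult:
  assumes "f$0 = 1" "eqN N (f*g) (f*h)" shows "eqN N g h"
proof -
  have "eqN N (f*(g-h)) 0" using assms(2) by (simp add: eqN_def algebra_simps)
  from eqN_cancel[OF assms(1) this] show ?thesis by (simp add: eqN_def)
qed


fun gb :: "'a::comm_ring_1 \<Rightarrow> nat \<Rightarrow> nat \<Rightarrow> 'a" where
  "gb Q 0 k = (if k = 0 then 1 else 0)"
| "gb Q (Suc m) k = (case k of 0 \<Rightarrow> 0 | Suc k' \<Rightarrow> gb Q m k') + Q^k * gb Q m k"

lemma gb_0[simp]: "gb Q m 0 = 1"
  by (induction m) auto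

lemma gb_above: "m < k \<Longrightarrow> gb Q m k = 0"
  by (induction m arbitrary: k) (auto split: nat.split)

definition qp :: "'a::comm_ring_1 \<Rightarrow> nat \<Rightarrow> 'a" where
  "qp Q k = (\<Prod>j\<in>{1..k}. 1 - Q^j)"

lemma qp_0[simp]: "qp Q 0 = 1" by (simp add: qp_def)
lemma qp_Suc: "qp Q (Suc k) = qp Q k * (1 - Q^Suc k)"
  by (simp add: qp_def prod.nat_ivl_Suc' mult.commute)

lemma tri_Suc: "Suc i * i div 2 = i * (i - 1) div 2 + i"
proof (cases i)
  case 0 then show ?thesis by simp
next
  case (Suc j)
  have "Suc i * i = i * (i - 1) + 2 * i" using Suc by (simp add: algebra_simps)
  then show ?thesis by simp
qed

lemma term_shift:
  "gb Q M i * Q^(Suc i * (Suc i - 1) div 2) * x^Suc i * y^(M-i)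
   = x * (gb Q M i * Q^(i*(i-1) div 2) * (x*Q)^i * y^(M-i))"
proof -
  have e: "Suc i * (Suc i - 1) div 2 = i*(i-1) div 2 + i" using tri_Suc by simp
  show ?thesis by (simp only: e power_add power_mult_distrib power_Suc ac_simps)
qed

lemma qbin:
  "(\<Prod>j<M. y + x * Q^j) = (\<Sum>i\<le>M. gb Q M i * Q^(i*(i-1) div 2) * x^i * y^(M-i))"
proof (induction M arbitrary: x)
  case 0 then show ?case by simp
next
  case (Suc M)
  have "(\<Prod>j<Suc M. y + x * Q^j) = (y + x) * (\<Prod>j<M. y + (x*Q) * Q^j)"
    by (subst prod.lessThan_Suc_shift) (simp add: mult.assoc)
  also have "\<dots> = (y + x) * (\<Sum>i\<le>M. gb Q M i * Q^(i*(i-1) div 2) * (x*Q)^i * y^(M-i))"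
    by (simp add: Suc.IH)
  finally have L: "(\<Prod>j<Suc M. y + x * Q^j) = y * (\<Sum>i\<le>M. gb Q M i * Q^(i*(i-1) div 2) * (x*Q)^i * y^(M-i))
      + x * (\<Sum>i\<le>M. gb Q M i * Q^(i*(i-1) div 2) * (x*Q)^i * y^(M-i))"
    by (simp add: algebra_simps)
  have "(\<Sum>i\<le>Suc M. gb Q (Suc M) i * Q^(i*(i-1) div 2) * x^i * y^(Suc M-i))
     = (\<Sum>i\<le>Suc M. (case i of 0 \<Rightarrow> 0 | Suc k' \<Rightarrow> gb Q M k') * Q^(i*(i-1) div 2) * x^i * y^(Suc M-i))
     + (\<Sum>i\<le>Suc M. Q^i * gb Q M i * Q^(i*(i-1) div 2) * x^i * y^(Suc M-i))"
    by (simp add: sum.distrib algebra_simps)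
  also have "(\<Sum>i\<le>Suc M. Q^i * gb Q M i * Q^(i*(i-1) div 2) * x^i * y^(Suc M-i))
      = (\<Sum>i\<le>M. Q^i * gb Q M i * Q^(i*(i-1) div 2) * x^i * y^(Suc M-i))"
    by (simp add: gb_above)
  also have "\<dots> = y * (\<Sum>i\<le>M. gb Q M i * Q^(i*(i-1) div 2) * (x*Q)^i * y^(M-i))"
    by (simp add: sum_distrib_left power_mult_distrib Suc_diff_le algebra_simps)
  also have "(\<Sum>i\<le>Suc M. (case i of 0 \<Rightarrow> 0 | Suc k' \<Rightarrow> gb Q M k') * Q^(i*(i-1) div 2) * x^i * y^(Suc M-i))
      = (\<Sum>i\<le>M. gb Q M i * Q^(Suc i * (Suc i - 1) div 2) * x^Suc i * y^(M-i))"
    by (subst sum.atMost_Suc_shift) simp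
  also have "\<dots> = x * (\<Sum>i\<le>M. gb Q M i * Q^(i*(i-1) div 2) * (x*Q)^i * y^(M-i))"
    by (simp only: sum_distrib_left term_shift)
  finally show ?case using L by (simp add: algebra_simps)
qed

lemma gb_qp: "i \<le> m \<Longrightarrow> qp Q i * qp Q (m - i) * gb Q m i = qp Q m"
proof (induction m arbitrary: i)
  case 0 then show ?case by simp
next
  case (Suc m)
  show ?case
  proof (cases i)
    case 0 then show ?thesis by simp
  next
    case (Suc i')
    with Suc.prems have i': "i' \<le> m" by simp
    have t1: "qp Q (Suc i') * qp Q (m - i') * gb Q m i' = (1 - Q^Suc i') * qp Q m"
      using Suc.IH[OF i'] by (simp add: qp_Suc algebra_simps)
    have t2: "qp Q (Suc i') * qp Q (m - i') * (Q^Suc i' * gb Q m (Suc i'))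
        = (1 - Q^(m - i')) * Q^Suc i' * qp Q m"
    proof (cases "i' = m")
      case True then show ?thesis by (simp add: gb_above)
    next
      case False
      then have le: "Suc i' \<le> m" using i' by simp
      have e: "m - i' = Suc (m - Suc i')" using le by simp
      have q: "qp Q (m - i') = qp Q (m - Suc i') * (1 - Q^(m-i'))"
        using e by (metis qp_Suc)
      have "qp Q (Suc i') * qp Q (m - i') * (Q^Suc i' * gb Q m (Suc i'))
         = (1 - Q^(m-i')) * Q^Suc i' * (qp Q (Suc i') * qp Q (m - Suc i') * gb Q m (Suc i'))"
        unfolding q by (simp only: ac_simps)
      then show ?thesis using Suc.IH[OF le] by simp
    qed
    have "gb Q (Suc m) i = gb Q m i' + Q^Suc i' * gb Q m (Suc i')" using Suc by simp
    then have "qp Q i * qp Q (Suc m - i) * gb Q (Suc m) i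
       = qp Q (Suc i') * qp Q (m - i') * gb Q m i' + qp Q (Suc i') * qp Q (m - i') * (Q^Suc i' * gb Q m (Suc i'))"
      using Suc by (simp add: algebra_simps)
    also have "\<dots> = (1 - Q^Suc i') * qp Q m + (1 - Q^(m - i')) * Q^Suc i' * qp Q m"
      by (simp only: t1 t2)
    also have "\<dots> = qp Q m * (1 - Q^(Suc i' + (m - i')))"
      by (simp add: algebra_simps power_add)
    also have "Suc i' + (m - i') = Suc m" using i' by simp
    finally show ?thesis by (simp add: qp_Suc)
  qed
qed


abbreviation XX :: "'a::comm_ring_1 fps" where "XX \<equiv> fps_X"
abbreviation CC :: "'a::comm_ring_1 \<Rightarrow> 'a fps" where "CC \<equiv> fps_const"

definition ipow :: "'a::comm_ring_1 \<Rightarrow> 'a \<Rightarrow> int \<Rightarrow> 'a" where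
  "ipow c ci k = (if k \<ge> 0 then c ^ nat k else ci ^ nat (-k))"

definition je :: "nat \<Rightarrow> nat \<Rightarrow> int \<Rightarrow> int" where
  "je b a k = int b * ((k * (k+1)) div 2) - int a * k"

definition jtpP :: "nat \<Rightarrow> nat \<Rightarrow> 'a::comm_ring_1 \<Rightarrow> 'a \<Rightarrow> nat \<Rightarrow> 'a fps" where
  "jtpP b a c ci L = (\<Prod>k<L. (1 + CC c * XX^(b*(k+1) - a)) * (1 + CC ci * XX^(b*k + a)))"

lemma prod_lessThan_add: "(\<Prod>j<m+(n::nat). f j) = (\<Prod>j<m. f j) * (\<Prod>j<n. f (m+j))"
  by (induction n) (simp_all add: ac_simps)

lemma ipow_shift:
  assumes "c * ci = 1"
  shows "c^L * ipow c ci (int i - int L) = c^i"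
proof (cases "L \<le> i")
  case True
  then have "nat (int i - int L) = i - L" by simp
  with True show ?thesis by (simp add: ipow_def power_add[symmetric])
next
  case False
  then have n: "nat (-(int i - int L)) = L - i" by simp
  have "c^L = c^i * c^(L-i)" using False by (simp add: power_add[symmetric])
  then have "c^L * ipow c ci (int i - int L) = c^i * (c*ci)^(L-i)"
    using False n by (simp add: ipow_def power_mult_distrib)
  then show ?thesis using assms by simp
qed

lemma even_tri: "2 * (k * (k+1) div 2) = k * (k+1)" for k :: int
  by simp

lemma nat_tri2: "2 * (i * (i-1) div 2) = i * (i-1)" for i :: nat
  by (cases i) simp_all

lemma int_lin_aux: "2 * int (b*T + Xv*Y) = int b * (2*int T) + 2*(int Xv * int Y)"
  by (simp add: algebra_simps)

lemma int_lin_aux2: "2 * (int (b*T + L*Xv) + J) = int b * (2*int T) + 2*(int L * int Xv) + 2 * (J::int)"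
  by (simp add: algebra_simps)

lemma exp_identity:
  assumes "a < b" "L \<ge> 1" "i \<le> 2*L"
  shows "int (b * (i*(i-1) div 2) + ((L-1)*b + a) * (2*L - i))
       = int (b * (L*(L-1) div 2) + L*((L-1)*b + a)) + je b a (int i - int L)"
proof -
  let ?k = "int i - int L"
  have h1: "2 * int (i*(i-1) div 2) = int i * (int i - 1)"
  proof -
    have "int (2 * (i*(i-1) div 2)) = int (i*(i-1))" by (simp only: nat_tri2)
    hence a: "2 * int (i*(i-1) div 2) = int (i*(i-1))" by (simp only: of_nat_mult of_nat_numeral)
    have b: "int (i*(i-1)) = int i * (int i - 1)" by (cases i) (simp_all add: algebra_simps)
    from a b show ?thesis by simp
  qed
  have h2: "2 * int (L*(L-1) div 2) = int L * (int L - 1)"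
  proof -
    have "int (2 * (L*(L-1) div 2)) = int (L*(L-1))" by (simp only: nat_tri2)
    hence a: "2 * int (L*(L-1) div 2) = int (L*(L-1))" by (simp only: of_nat_mult of_nat_numeral)
    have b: "int (L*(L-1)) = int L * (int L - 1)" by (cases L) (simp_all add: algebra_simps)
    from a b show ?thesis by simp
  qed
  have h3: "2 * ((?k * (?k+1)) div 2) = ?k * (?k + 1)" by (rule even_tri)
  have c1: "int ((L-1)*b + a) = (int L - 1) * int b + int a" using assms by (simp add: of_nat_diff)
  have c2: "int (2*L - i) = 2 * int L - int i" using assms by simp
  have "2 * int (b * (i*(i-1) div 2) + ((L-1)*b + a) * (2*L - i))
     = int b * (2 * int (i*(i-1) div 2)) + 2 * (int ((L-1)*b + a) * int (2*L - i))"
    by (rule int_lin_aux)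
  also have "\<dots> = int b * (int i * (int i - 1)) + 2 * (((int L - 1) * int b + int a) * (2 * int L - int i))"
    by (simp only: h1 c1 c2)
  also have "\<dots> = 2 * (int (b * (L*(L-1) div 2) + L*((L-1)*b + a)) + je b a ?k)"
  proof -
    have "2 * (int (b * (L*(L-1) div 2) + L*((L-1)*b + a)) + je b a ?k)
       = int b * (2 * int (L*(L-1) div 2)) + 2 * (int L * int ((L-1)*b + a)) + int b * (2 * ((?k * (?k+1)) div 2)) - 2 * int a * ?k"
      unfolding int_lin_aux2 by (simp add: je_def algebra_simps)
    also have "\<dots> = int b * (int L * (int L - 1)) + 2 * (int L * ((int L - 1) * int b + int a)) + int b * (?k * (?k + 1)) - 2 * int a * ?k"
      by (simp only: h2 c1 h3)
    finally show ?thesis by (simp add: algebra_simps)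
  qed
  finally show ?thesis by simp
qed


lemma sq_ge: "(k::int) \<ge> 0 \<Longrightarrow> k * k \<ge> k"
  by (simp add: mult_le_cancel_left1)

lemma sq_ge2: assumes "(k::int) < 0" shows "k*k + k \<ge> 2*(-k) - 2"
proof -
  define j where "j = -k"
  have j: "j \<ge> 1" using assms j_def by simp
  have "(j-1)*(j-2) \<ge> 0"
  proof (cases "j = 1")
    case True then show ?thesis by simp
  next
    case False then have "j - 2 \<ge> 0" using j by simp
    then show ?thesis using j by (simp add: mult_nonneg_nonneg)
  qed
  then show ?thesis unfolding j_def by (simp add: algebra_simps)
qed

lemma je_bound:
  assumes "a < b"
  shows "je b a k \<ge> 0" "je b a k \<ge> \<bar>k\<bar> - 1"
proof -
  define t where "t = (k*(k+1)) div 2"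
  have t2: "2*t = k*(k+1)" unfolding t_def by (rule even_tri)
  have bb: "int b \<ge> 1" "int a \<le> int b - 1" using assms by auto
  have "je b a k \<ge> 0 \<and> je b a k \<ge> \<bar>k\<bar> - 1"
  proof (cases "k \<ge> 0")
    case True
    have "t \<ge> k" using t2 sq_ge[OF True] by (simp add: algebra_simps)
    have "je b a k = int b * t - int a * k" by (simp add: je_def t_def)
    also have "\<dots> \<ge> int b * t - (int b - 1) * k"
      using bb True by (simp add: mult_right_mono)
    finally have "je b a k \<ge> int b * (t - k) + k" by (simp add: algebra_simps)
    moreover have "int b * (t - k) \<ge> 0" using \<open>t \<ge> k\<close> bb by simp
    ultimately show ?thesis using True by simp
  next
    case False
    then have kn: "k < 0" by simp
    have "2*t \<ge> 2*(-k) - 2" using t2 sq_ge2[OF kn] by (simp add: algebra_simps)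
    then have tb: "t \<ge> -k - 1" by simp
    have t0: "t \<ge> 0" using tb kn by simp
    have "je b a k = int b * t + int a * (-k)" by (simp add: je_def t_def)
    moreover have "int b * t \<ge> t" using bb t0 by (simp add: mult_right_mono[of 1 "int b" t, simplified])
    moreover have "int a * (-k) \<ge> 0"
    proof -
      have "int a * k \<le> 0" using kn by (intro mult_nonneg_nonpos) auto
      then show ?thesis by simp
    qed
    ultimately show ?thesis using tb t0 kn by simp
  qed
  then show "je b a k \<ge> 0" "je b a k \<ge> \<bar>k\<bar> - 1" by auto
qed

lemma prod_X_pow: "(\<Prod>j<L. (XX::'a::comm_ring_1 fps)^(b*j)) = XX^(b*(L*(L-1) div 2))"
proof (induction L)
  case 0 then show ?case by simp
next
  case (Suc L)
  have "Suc L * (Suc L - 1) div 2 = L*(L-1) div 2 + L" using tri_Suc[of L] by simp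
  then show ?case using Suc by (simp add: power_add[symmetric] algebra_simps)
qed

lemma X_cancel: "XX^E * f = XX^E * g \<Longrightarrow> f = g"
proof (rule fps_ext)
  fix n assume "XX^E * f = XX^E * g"
  then have "(XX^E * f) $ (n+E) = (XX^E * g) $ (n+E)" by simp
  then show "f $ n = g $ n" by (simp add: fps_X_power_mult_nth)
qed

lemma jtp_finite:
  fixes c ci :: "'a::comm_ring_1"
  assumes cc: "c*ci = 1" and ab: "a < b" and L: "L \<ge> 1"
  shows "jtpP b a c ci L = (\<Sum>i\<le>2*L. gb (XX^b) (2*L) i * CC (ipow c ci (int i - int L)) * XX^(nat (je b a (int i - int L))))"
proof -
  let ?y = "XX^((L-1)*b + a) :: 'a fps"
  let ?x = "CC c :: 'a fps"
  let ?Q = "XX^b :: 'a fps"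
  define E where "E = b * (L*(L-1) div 2) + L*((L-1)*b + a)"
  have q: "(\<Prod>j<2*L. ?y + ?x * ?Q^j) = (\<Sum>i\<le>2*L. gb ?Q (2*L) i * ?Q^(i*(i-1) div 2) * ?x^i * ?y^(2*L-i))"
    by (rule qbin)
  have f1: "?y + ?x * ?Q^j = CC c * XX^(b*j) * (1 + CC ci * XX^(b*(L-1-j) + a))" if "j < L" for j
  proof -
    have e0: "j + (L-1-j) = L-1" using that by simp
    have e1: "b*j + b*(L-1-j) = b*(L-1)" by (metis add_mult_distrib2 e0)
    have e: "b*j + (b*(L-1-j) + a) = (L-1)*b + a" by (metis add.assoc mult.commute e1)
    have "CC c * XX^(b*j) * (1 + CC ci * XX^(b*(L-1-j) + a)) = CC c * XX^(b*j) + (CC c * CC ci) * (XX^(b*j) * XX^(b*(L-1-j) + a))"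
      by (simp only: distrib_left mult_1_right mult_1_left ac_simps)
    also have "\<dots> = ?x * ?Q^j + ?y"
    proof -
      have y: "XX^(b*j) * XX^(b*(L-1-j) + a) = ?y" by (simp only: power_add[symmetric] e)
      have cc1: "CC c * CC ci = (1::'a fps)" using cc by simp
      show ?thesis by (simp only: y cc1 mult_1_left) (simp only: power_mult)
    qed
    finally show ?thesis by simp
  qed
  have f2: "?y + ?x * ?Q^(L+j) = ?y * (1 + CC c * XX^(b*(j+1) - a))" for j
  proof -
    have "a \<le> b*(j+1)" using ab by (metis less_imp_le_nat mult.commute mult_le_mono1 mult_1 le_add2 order_trans)
    then have d: "a + (b*(j+1) - a) = b*(j+1)" by simp
    have e2: "(L-1)*b + b*(j+1) = b*(L+j)" using L by (cases L) (simp_all add: algebra_simps)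
    have e: "(L-1)*b + a + (b*(j+1) - a) = b*(L+j)" using d e2 by (simp only: add.assoc)
    have "?y * (1 + CC c * XX^(b*(j+1) - a)) = ?y + CC c * XX^((L-1)*b + a + (b*(j+1) - a))"
      by (simp add: algebra_simps power_add)
    also have "\<dots> = ?y + ?x * ?Q^(L+j)" using e by (simp add: power_mult)
    finally show ?thesis by simp
  qed
  have "(\<Prod>j<2*L. ?y + ?x * ?Q^j) = (\<Prod>j<L. ?y + ?x * ?Q^j) * (\<Prod>j<L. ?y + ?x * ?Q^(L+j))"
    using prod_lessThan_add[of "\<lambda>j. ?y + ?x * ?Q^j" L L] by (simp add: mult_2)
  also have "(\<Prod>j<L. ?y + ?x * ?Q^j) = (\<Prod>j<L. CC c * XX^(b*j) * (1 + CC ci * XX^(b*(L-1-j) + a)))"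
    by (rule prod.cong[OF refl]) (rule f1, simp)
  also have "\<dots> = CC c ^ L * (\<Prod>j<L. XX^(b*j)) * (\<Prod>j<L. 1 + CC ci * XX^(b*(L-1-j) + a))"
    by (simp add: prod.distrib)
  also have "(\<Prod>j<L. 1 + CC ci * XX^(b*(L-1-j) + a)) = (\<Prod>j<L. 1 + CC ci * XX^(b*j + a))"
    using prod.nat_diff_reindex[of "\<lambda>j. 1 + CC ci * XX^(b*j + a)" L] by simp
  also have "(\<Prod>j<L. ?y + ?x * ?Q^(L+j)) = ?y^L * (\<Prod>j<L. 1 + CC c * XX^(b*(j+1) - a))"
    by (simp only: f2 prod.distrib prod_constant card_lessThan)
  finally have lhs0: "(\<Prod>j<2*L. ?y + ?x * ?Q^j) = CC c ^ L * XX^(b*(L*(L-1) div 2)) * (\<Prod>j<L. 1 + CC ci * XX^(b*j + a)) *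
      (?y^L * (\<Prod>j<L. 1 + CC c * XX^(b*(j+1) - a)))"
    by (simp only: prod_X_pow)
  have yE: "XX^(b*(L*(L-1) div 2)) * ?y^L = XX^E"
  proof -
    have "?y^L = XX^(((L-1)*b + a)*L)" by (simp only: power_mult)
    then show ?thesis unfolding E_def by (simp only: power_add mult.commute)
  qed
  have jd: "jtpP b a c ci L = (\<Prod>j<L. 1 + CC c * XX^(b*(j+1) - a)) * (\<Prod>j<L. 1 + CC ci * XX^(b*j + a))"
    unfolding jtpP_def by (rule prod.distrib)
  have lhs: "(\<Prod>j<2*L. ?y + ?x * ?Q^j) = CC (c^L) * XX^E * jtpP b a c ci L"
    unfolding lhs0 jd yE[symmetric] fps_const_power by (simp only: ac_simps)
  have tm: "gb ?Q (2*L) i * ?Q^(i*(i-1) div 2) * ?x^i * ?y^(2*L-i)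
      = CC (c^L) * XX^E * (gb ?Q (2*L) i * CC (ipow c ci (int i - int L)) * XX^(nat (je b a (int i - int L))))"
    if "i \<le> 2*L" for i
  proof -
    have ei: "int (b * (i*(i-1) div 2) + ((L-1)*b + a) * (2*L - i)) = int E + je b a (int i - int L)"
      unfolding E_def by (rule exp_identity[OF ab L that])
    have "b * (i*(i-1) div 2) + ((L-1)*b + a) * (2*L - i) = E + nat (je b a (int i - int L))"
      using ei je_bound(1)[OF ab, of "int i - int L"] by linarith
    then have xe: "?Q^(i*(i-1) div 2) * ?y^(2*L-i) = XX^E * XX^(nat (je b a (int i - int L)))"
      by (simp add: power_mult[symmetric] power_add[symmetric])
    have ce: "?x^i = CC (c^L) * CC (ipow c ci (int i - int L))"
      using ipow_shift[OF cc, of L i] by (simp add: fps_const_power)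
    have "gb ?Q (2*L) i * ?Q^(i*(i-1) div 2) * ?x^i * ?y^(2*L-i) = gb ?Q (2*L) i * ?x^i * (?Q^(i*(i-1) div 2) * ?y^(2*L-i))"
      by (simp only: ac_simps)
    also have "\<dots> = gb ?Q (2*L) i * (CC (c^L) * CC (ipow c ci (int i - int L))) * (XX^E * XX^(nat (je b a (int i - int L))))"
      by (simp only: ce xe)
    finally show ?thesis by (simp only: ac_simps)
  qed
  have rhs: "(\<Sum>i\<le>2*L. gb ?Q (2*L) i * ?Q^(i*(i-1) div 2) * ?x^i * ?y^(2*L-i))
     = CC (c^L) * XX^E * (\<Sum>i\<le>2*L. gb ?Q (2*L) i * CC (ipow c ci (int i - int L)) * XX^(nat (je b a (int i - int L))))"
    unfolding sum_distrib_left by (rule sum.cong[OF refl]) (rule tm, simp)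
  have "CC (c^L) * XX^E * jtpP b a c ci L = CC (c^L) * XX^E * (\<Sum>i\<le>2*L. gb ?Q (2*L) i * CC (ipow c ci (int i - int L)) * XX^(nat (je b a (int i - int L))))"
    using q lhs rhs by simp
  then have "CC (ci^L) * (CC (c^L) * (XX^E * jtpP b a c ci L)) = CC (ci^L) * (CC (c^L) * (XX^E * (\<Sum>i\<le>2*L. gb ?Q (2*L) i * CC (ipow c ci (int i - int L)) * XX^(nat (je b a (int i - int L))))))"
    by (simp add: mult.assoc)
  moreover have "CC (ci^L) * CC (c^L) = (1 :: 'a fps)"
    using cc by (simp add: power_mult_distrib[symmetric] mult.commute)
  ultimately have "XX^E * jtpP b a c ci L = XX^E * (\<Sum>i\<le>2*L. gb ?Q (2*L) i * CC (ipow c ci (int i - int L)) * XX^(nat (je b a (int i - int L))))"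
    by (simp only: mult.assoc[symmetric] mult_1)
  then show ?thesis by (rule X_cancel)
qed


definition G :: "('i \<Rightarrow> 'a::comm_ring_1) \<Rightarrow> ('i \<Rightarrow> int) \<Rightarrow> 'a fps" where
  "G w e = Abs_fps (\<lambda>M. (\<Sum>x | e x = int M. w x))"

lemma G_nth: "G w e $ M = (\<Sum>x | e x = int M. w x)" by (simp add: G_def)

lemma cX_nth: "(CC a * XX^n) $ M = (if M = n then a else 0)"
  by (simp add: mult.commute[of "CC a"] fps_X_power_mult_nth)

lemma XpowX: "((XX::'a::comm_ring_1 fps)^b)^n = XX^(b*n)" by (simp add: power_mult)

lemma qp_X_0: "b \<ge> 1 \<Longrightarrow> (qp ((XX::'a::comm_ring_1 fps)^b) k) $ 0 = 1"
  by (induction k) (simp_all add: qp_Suc XpowX)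

lemma eqN_one_minus: "N < m \<Longrightarrow> eqN N (1 - (XX::'a::comm_ring_1 fps)^m) 1"
  by (simp add: eqN_def)

lemma qp_eqN: assumes "b \<ge> 1" "N \<le> k" shows "eqN N (qp ((XX::'a::comm_ring_1 fps)^b) k) (qp (XX^b) N)"
  using assms(2)
proof (induction k rule: dec_induct)
  case base then show ?case by simp
next
  case (step k)
  have "N < b * Suc k" using step.hyps assms(1) by (metis le_imp_less_Suc mult_1 mult_le_mono1 order_less_le_trans)
  then have "eqN N (1 - (XX::'a fps)^(b*Suc k)) 1" by (rule eqN_one_minus)
  then have "eqN N (qp ((XX::'a fps)^b) k * (1 - XX^(b*Suc k))) (qp (XX^b) N * 1)"
    by (rule eqN_mult[OF step.IH])
  then show ?case by (simp only: qp_Suc XpowX mult_1_right)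
qed

lemma qp_gb_eqN:
  assumes b: "b \<ge> 1" and i: "i \<le> m" "N \<le> i" "N \<le> m - i" "N \<le> k"
  shows "eqN N (qp ((XX::'a::comm_ring_1 fps)^b) k * gb (XX^b) m i) 1"
proof -
  let ?q = "qp ((XX::'a fps)^b)"
  have h: "?q i * ?q (m-i) * gb (XX^b) m i = ?q m" by (rule gb_qp[OF i(1)])
  have "eqN N (?q i * ?q (m-i) * gb (XX^b) m i) (?q N * ?q N * gb (XX^b) m i)"
    using qp_eqN[OF b i(2)] qp_eqN[OF b i(3)] by (intro eqN_mult) simp_all
  moreover have "eqN N (?q m) (?q N)" using i by (intro qp_eqN[OF b]) simp
  ultimately have "eqN N (?q N * (?q N * gb (XX^b) m i)) (?q N * 1)"
    using h by (simp add: eqN_def mult.assoc)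
  then have "eqN N (?q N * gb (XX^b) m i) 1"
    by (rule eqN_cancel_mult[OF qp_X_0[OF b]])
  moreover have "eqN N (?q k) (?q N)" using qp_eqN[OF b i(4)] .
  ultimately show ?thesis using eqN_mult[of N "?q k" "?q N" "gb (XX^b) m i" "gb (XX^b) m i"]
    by (metis eqN_refl eqN_trans)
qed

lemma je_fiber_subset:
  assumes "a < b" shows "{k. je b a k = int M} \<subseteq> {-(int M+1)..int M+1}"
proof (rule subsetI)
  fix k assume "k \<in> {k. je b a k = int M}"
  then have "\<bar>k\<bar> \<le> int M + 1" using je_bound(2)[OF assms, of k] by simp
  then show "k \<in> {-(int M+1)..int M+1}" by (auto simp: abs_le_iff)
qed

lemma je_fiber_finite:
  assumes "a < b" shows "finite {k. je b a k = int M}"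
  using je_fiber_subset[OF assms] finite_subset by blast

lemma jtp_trunc:
  fixes c ci :: "'a::comm_ring_1"
  assumes cc: "c*ci = 1" and ab: "a < b" and L: "L \<ge> 2*N+2"
  shows "eqN N (qp (XX^b) L * jtpP b a c ci L) (G (ipow c ci) (je b a))"
proof -
  have L1: "L \<ge> 1" using L by simp
  have b: "b \<ge> 1" using ab by simp
  let ?k = "\<lambda>i::nat. int i - int L"
  let ?T = "\<lambda>i. CC (ipow c ci (?k i)) * XX^(nat (je b a (?k i))) :: 'a fps"
  have "qp (XX^b) L * jtpP b a c ci L = (\<Sum>i\<le>2*L. qp (XX^b) L * gb (XX^b) (2*L) i * ?T i)"
    unfolding jtp_finite[OF cc ab L1] sum_distrib_left by (simp only: mult.assoc mult.left_commute)
  also have "eqN N \<dots> (\<Sum>i\<le>2*L. ?T i)"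
  proof (rule eqN_sum)
    fix i assume "i \<in> {..2*L}"
    then have i2: "i \<le> 2*L" by simp
    show "eqN N (qp (XX^b) L * gb (XX^b) (2*L) i * ?T i) (?T i)"
    proof (cases "nat (je b a (?k i)) \<le> N")
      case True
      then have "je b a (?k i) \<le> int N" by simp
      then have "\<bar>?k i\<bar> \<le> int N + 1" using je_bound(2)[OF ab, of "?k i"] by simp
      then have "N \<le> i" "N \<le> 2*L - i" using L by auto
      moreover have "N \<le> L" using L by simp
      ultimately have "eqN N (qp (XX^b) L * gb (XX^b) (2*L) i) 1"
        by (rule qp_gb_eqN[OF b i2])
      then have "eqN N (qp (XX^b) L * gb (XX^b) (2*L) i * ?T i) (1 * ?T i)"
        by (rule eqN_mult) simp
      then show ?thesis by simp
    next
      case False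
      then have "eqN N (XX^(nat (je b a (?k i))) * (qp (XX^b) L * gb (XX^b) (2*L) i * CC (ipow c ci (?k i)))) 0"
        "eqN N (XX^(nat (je b a (?k i))) * CC (ipow c ci (?k i))) 0"
        by (simp_all add: eqN_X_high)
      then show ?thesis by (simp add: eqN_def ac_simps)
    qed
  qed
  also have "eqN N (\<Sum>i\<le>2*L. ?T i) (G (ipow c ci) (je b a))"
    unfolding eqN_def
  proof (intro allI impI)
    fix M assume M: "M \<le> N"
    have "(\<Sum>i\<le>2*L. ?T i) $ M = (\<Sum>i\<le>2*L. if M = nat (je b a (?k i)) then ipow c ci (?k i) else 0)"
      unfolding fps_sum_nth by (intro sum.cong refl) (simp only: cX_nth)
    also have "\<dots> = (\<Sum>i\<in>{i. i \<le> 2*L \<and> je b a (?k i) = int M}. ipow c ci (?k i))"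
      using je_bound(1)[OF ab] by (intro sum.mono_neutral_cong_right) auto
    also have "\<dots> = (\<Sum>k | je b a k = int M. ipow c ci k)"
    proof (rule sum.reindex_bij_witness[of _ "\<lambda>k. nat (k + int L)" ?k])
      fix k assume "k \<in> {k. je b a k = int M}"
      then have "\<bar>k\<bar> \<le> int N + 1" using je_bound(2)[OF ab, of k] M by simp
      then show "nat (k + int L) \<in> {i. i \<le> 2*L \<and> je b a (?k i) = int M}"
        "?k (nat (k + int L)) = k"
        using L \<open>k \<in> {k. je b a k = int M}\<close> by auto
    qed auto
    finally show "(\<Sum>i\<le>2*L. ?T i) $ M = G (ipow c ci) (je b a) $ M" by (simp add: G_nth)
  qed
  finally show ?thesis .
qed


lemma G_mult:
  fixes w1 :: "'i \<Rightarrow> 'a::comm_ring_1" and w2 :: "'j \<Rightarrow> 'a"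
  assumes p1: "\<And>x. e1 x \<ge> 0" and p2: "\<And>y. e2 y \<ge> 0"
    and f1: "\<And>M. finite {x. e1 x = int M}" and f2: "\<And>M. finite {y. e2 y = int M}"
  shows "G w1 e1 * G w2 e2 = G (\<lambda>(x,y). w1 x * w2 y) (\<lambda>(x,y). e1 x + e2 y)"
proof (rule fps_ext)
  fix M
  let ?A = "\<lambda>i. {x. e1 x = int i} \<times> {y. e2 y = int (M - i)}"
  have "(G w1 e1 * G w2 e2) $ M = (\<Sum>i=0..M. (\<Sum>x | e1 x = int i. w1 x) * (\<Sum>y | e2 y = int (M-i). w2 y))"
    by (simp add: fps_mult_nth G_nth)
  also have "\<dots> = (\<Sum>i=0..M. \<Sum>p\<in>?A i. (\<lambda>(x,y). w1 x * w2 y) p)"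
    by (simp add: sum_product sum.cartesian_product)
  also have "\<dots> = (\<Sum>p\<in>(\<Union>i\<in>{0..M}. ?A i). (\<lambda>(x,y). w1 x * w2 y) p)"
  proof (rule sum.UNION_disjoint[symmetric])
    show "\<forall>i\<in>{0..M}. finite (?A i)" by (intro ballI finite_cartesian_product f1 f2)
  qed auto
  also have "(\<Union>i\<in>{0..M}. ?A i) = {p. (\<lambda>(x,y). e1 x + e2 y) p = int M}"
  proof (intro equalityI subsetI)
    fix p assume "p \<in> (\<Union>i\<in>{0..M}. ?A i)"
    then show "p \<in> {p. (\<lambda>(x,y). e1 x + e2 y) p = int M}" by auto
  next
    fix p assume "p \<in> {p. (\<lambda>(x,y). e1 x + e2 y) p = int M}"
    then obtain x y where p: "p = (x,y)" "e1 x + e2 y = int M" by (cases p) auto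
    have "e1 x = int (nat (e1 x))" "e2 y = int (M - nat (e1 x))" "nat (e1 x) \<in> {0..M}"
      using p(2) p1[of x] p2[of y] by auto
    then show "p \<in> (\<Union>i\<in>{0..M}. ?A i)" using p by blast
  qed
  finally show "(G w1 e1 * G w2 e2) $ M = G (\<lambda>(x,y). w1 x * w2 y) (\<lambda>(x,y). e1 x + e2 y) $ M"
    by (simp add: G_nth)
qed

definition sg :: "int \<Rightarrow> 'a::comm_ring_1" where "sg k = (if even k then 1 else -1)"

lemma je_2: "2 * je b a k = int b * (k * (k+1)) - 2 * int a * k"
proof -
  have "2 * je b a k = int b * (2 * (k*(k+1) div 2)) - 2 * int a * k" by (simp add: je_def algebra_simps)
  then show ?thesis by (simp only: even_tri)
qed

definition w1 :: "int \<times> int \<Rightarrow> 'a::comm_ring_1" where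
  "w1 p = sg (fst p + snd p) * of_int (2 * snd p - fst p)"
definition e1 :: "int \<times> int \<Rightarrow> int" where
  "e1 p = je 1 0 (fst p) + je 2 1 (snd p)"
definition w2 :: "int \<times> int \<Rightarrow> 'a::comm_ring_1" where
  "w2 p = sg (fst p) * of_int (6 * snd p + 1)"
definition e2 :: "int \<times> int \<Rightarrow> int" where
  "e2 p = je 6 2 (fst p) + je 3 1 (snd p)"

definition h0 :: "int \<times> int \<Rightarrow> int \<times> int" where "h0 p = (2 * fst p + snd p, fst p - snd p)"
definition h1 :: "int \<times> int \<Rightarrow> int \<times> int" where "h1 p = (-2 * fst p - snd p - 1, snd p - fst p)"
definition g0 :: "int \<times> int \<Rightarrow> int \<times> int" where
  "g0 p = (snd p - (2 * snd p - fst p) div 3, - ((2 * snd p - fst p) div 3))"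
definition g1 :: "int \<times> int \<Rightarrow> int \<times> int" where
  "g1 p = ((2 * snd p - fst p - 1) div 3 - snd p, (2 * snd p - fst p - 1) div 3)"
definition iota :: "int \<times> int \<Rightarrow> int \<times> int" where
  "iota p = (let r = 2 * snd p - fst p; s = (r - 2) div 3; m2 = 2*s + 1 - snd p in (2*m2 - r, m2))"

lemma e1_h0: "e1 (h0 p) = e2 p"
proof -
  have "2 * e1 (h0 p) = 2 * e2 p"
    unfolding e1_def e2_def h0_def by (simp add: distrib_left je_2 algebra_simps)
  then show ?thesis by simp
qed

lemma e1_h1: "e1 (h1 p) = e2 p"
proof -
  have "2 * e1 (h1 p) = 2 * e2 p"
    unfolding e1_def e2_def h1_def by (simp add: distrib_left je_2 algebra_simps)
  then show ?thesis by simp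
qed

lemma e1_iota: assumes "(2 * snd p - fst p) mod 3 = 2" shows "e1 (iota p) = e1 p"
proof -
  obtain n m where p: "p = (n,m)" by (cases p)
  define s where "s = (2*m - n - 2) div 3"
  have r: "2*m - n = 3*s + 2" using assms unfolding p s_def by simp presburger
  have n: "n = 2*m - 3*s - 2" using r by simp
  have ip: "iota p = (s - 2*m, 2*s + 1 - m)" unfolding iota_def p Let_def s_def[symmetric] using r by simp
  have "2 * e1 (iota p) = 2 * e1 p"
    unfolding ip unfolding p e1_def by (simp add: distrib_left je_2 n algebra_simps)
  then show ?thesis by simp
qed


lemma sg_3: "sg (3*j) = sg j" by (simp add: sg_def)
lemma sg_3m1: "sg (-3*j - 1) = - (sg j :: 'a::comm_ring_1)" by (simp add: sg_def)

lemma h0g0: assumes "(2 * m - n) mod 3 = 0" shows "h0 (g0 (n,m)) = (n,m)"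
proof -
  obtain q where q: "2*m - n = 3*q" using assms by (metis dvd_def mod_0_imp_dvd)
  then have "(2*m - n) div 3 = q" by simp
  then show ?thesis unfolding g0_def h0_def using q by simp
qed
lemma g0h0: "g0 (h0 (j,k)) = (j,k)"
proof -
  have "2 * (j - k) - (2*j + k) = 3 * (-k)" by simp
  then have "(2 * (j - k) - (2*j + k)) div 3 = -k" by presburger
  then show ?thesis unfolding g0_def h0_def by simp
qed
lemma h0_mod: "(2 * snd (h0 p) - fst (h0 p)) mod 3 = 0"
  unfolding h0_def by simp

lemma h1g1: assumes "(2 * m - n) mod 3 = 1" shows "h1 (g1 (n,m)) = (n,m)"
proof -
  define q where "q = (2*m - n - 1) div 3"
  have q: "2*m - n = 3*q + 1" using assms unfolding q_def by presburger
  show ?thesis unfolding g1_def h1_def using q q_def by simp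
qed
lemma g1h1: "g1 (h1 (j,k)) = (j,k)"
proof -
  have "(2 * (k - j) - (-2*j - k - 1) - 1) = 3 * k" by simp
  then have "(2 * (k - j) - (-2*j - k - 1) - 1) div 3 = k" by presburger
  then show ?thesis unfolding g1_def h1_def by simp
qed
lemma h1_mod: "(2 * snd (h1 p) - fst (h1 p)) mod 3 = 1"
  unfolding h1_def by simp

lemma iota_facts:
  assumes "(2 * m - n) mod 3 = 2"
  shows "iota (iota (n,m)) = (n,m)" "(2 * snd (iota (n,m)) - fst (iota (n,m))) mod 3 = 2"
    "w1 (iota (n,m)) = - (w1 (n,m) :: 'a::comm_ring_1)"
proof -
  define s where "s = (2*m - n - 2) div 3"
  have r: "2*m - n = 3*s + 2" using assms unfolding s_def by presburger
  have ip: "iota (n,m) = (s - 2*m, 2*s + 1 - m)" unfolding iota_def Let_def s_def[symmetric] using r by simp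
  have r2: "2 * (2*s + 1 - m) - (s - 2*m) = 3*s + 2" by simp
  have "(3*s + 2 - 2) div 3 = s" by simp
  then have ip2: "iota (s - 2*m, 2*s + 1 - m) = (n, m)" unfolding iota_def Let_def using r2 r by simp
  show "iota (iota (n,m)) = (n,m)" using ip ip2 by simp
  show "(2 * snd (iota (n,m)) - fst (iota (n,m))) mod 3 = 2" unfolding ip using r2 by simp
  have par: "even (s - 2*m + (2*s + 1 - m)) \<longleftrightarrow> \<not> even (n + m)" using r by presburger
  show "w1 (iota (n,m)) = - (w1 (n,m) :: 'a)" unfolding ip w1_def sg_def using r2 r par by simp
qed

lemma w1_h01: "w1 (h0 p) + w1 (h1 p) = - (w2 p :: 'a::comm_ring_1)"
proof -
  obtain j k where p: "p = (j,k)" by (cases p)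
  have pa: "even (2*j + k + (j - k)) \<longleftrightarrow> even j" by presburger
  have pb: "even (-2*j - k - 1 + (k - j)) \<longleftrightarrow> \<not> even j" by presburger
  have a: "w1 (h0 (j,k)) = sg j * (- 3 * (of_int k :: 'a))"
    unfolding h0_def w1_def sg_def using pa by simp
  have b: "w1 (h1 (j,k)) = - sg j * (3 * (of_int k :: 'a) + 1)"
    unfolding h1_def w1_def sg_def using pb by simp
  have c: "w2 (j,k) = sg j * (6 * (of_int k :: 'a) + 1)"
    unfolding w2_def by simp
  have "w1 (h0 (j,k)) + w1 (h1 (j,k)) = - (w2 (j,k) :: 'a)"
    unfolding a b c by (simp add: algebra_simps)
  then show ?thesis using p by simp
qed

lemma e1_nonneg: "e1 p \<ge> 0" unfolding e1_def using je_bound(1)[of 0 1] je_bound(1)[of 1 2] by (simp add: add_nonneg_nonneg)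
lemma e2_nonneg: "e2 p \<ge> 0" unfolding e2_def using je_bound(1)[of 2 6] je_bound(1)[of 1 3] by (simp add: add_nonneg_nonneg)

lemma e1_finite: "finite {p. e1 p = int M}"
proof -
  have sub: "{p. e1 p = int M} \<subseteq> {k. je 1 0 k \<le> int M} \<times> {k. je 2 1 k \<le> int M}"
  proof (rule subsetI)
    fix p assume "p \<in> {p. e1 p = int M}"
    moreover obtain n m where "p = (n,m)" by (cases p)
    moreover have "je 1 0 n \<ge> 0" "je 2 1 m \<ge> 0" using je_bound(1)[of 0 1] je_bound(1)[of 1 2] by simp_all
    ultimately show "p \<in> {k. je 1 0 k \<le> int M} \<times> {k. je 2 1 k \<le> int M}" unfolding e1_def by auto
  qed
  moreover have fk: "finite {k. je b a k \<le> int M}" if "a < b" for a b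
  proof -
    have "{k. je b a k \<le> int M} \<subseteq> {-(int M+1)..int M+1}"
    proof (rule subsetI)
      fix k assume "k \<in> {k. je b a k \<le> int M}"
      then have "\<bar>k\<bar> \<le> int M + 1" using je_bound(2)[OF that, of k] by simp
      then show "k \<in> {-(int M+1)..int M+1}" by (auto simp: abs_le_iff)
    qed
    then show ?thesis using finite_subset by blast
  qed
  moreover have fin2: "finite ({k. je 1 0 k \<le> int M} \<times> {k. je 2 1 k \<le> int M})"
    by (intro finite_cartesian_product fk) simp_all
  ultimately show ?thesis using finite_subset[OF sub fin2] by simp
qed


lemma stepB: "G (w1 :: int \<times> int \<Rightarrow> rat) e1 = - G w2 e2"
proof (rule fps_ext)
  fix M
  let ?F1 = "{p. e1 p = int M}" and ?F2 = "{p. e2 p = int M}"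
  let ?A = "\<lambda>r. {p \<in> ?F1. (2 * snd p - fst p) mod 3 = r}"
  have fin: "finite ?F1" by (rule e1_finite)
  have m3: "\<And>x::int. x mod 3 = 0 \<or> x mod 3 = 1 \<or> x mod 3 = 2" by presburger
  have split: "?F1 = ?A 0 \<union> (?A 1 \<union> ?A 2)"
  proof (intro equalityI subsetI)
    fix p assume "p \<in> ?F1" then show "p \<in> ?A 0 \<union> (?A 1 \<union> ?A 2)" using m3[of "2 * snd p - fst p"] by blast
  qed blast
  have fA: "finite (?A r)" for r by (rule finite_subset[OF _ fin]) blast
  have u1: "sum (w1::_\<Rightarrow>rat) (?A 1 \<union> ?A 2) = sum w1 (?A 1) + sum w1 (?A 2)"
    by (rule sum.union_disjoint) (use fA in auto)
  have u0: "sum (w1::_\<Rightarrow>rat) (?A 0 \<union> (?A 1 \<union> ?A 2)) = sum w1 (?A 0) + sum w1 (?A 1 \<union> ?A 2)"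
    by (rule sum.union_disjoint) (use fA in auto)
  have s1: "sum (w1::_\<Rightarrow>rat) ?F1 = sum w1 (?A 0) + (sum w1 (?A 1) + sum w1 (?A 2))"
    using arg_cong[OF split, of "sum (w1::_\<Rightarrow>rat)"] u0 u1 by simp
  have A0: "sum (w1::_\<Rightarrow>rat) (?A 0) = sum (\<lambda>p. w1 (h0 p)) ?F2"
  proof (rule sum.reindex_bij_witness[of _ h0 g0])
    fix a assume a: "a \<in> ?A 0"
    obtain n m where nm: "a = (n,m)" by (cases a)
    show "h0 (g0 a) = a" using a h0g0 nm by auto
    then show "g0 a \<in> ?F2" using a e1_h0[of "g0 a"] by simp
    show "w1 (h0 (g0 a)) = w1 a" using \<open>h0 (g0 a) = a\<close> by simp
  next
    fix b assume b: "b \<in> ?F2"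
    obtain j k where jk: "b = (j,k)" by (cases b)
    show "g0 (h0 b) = b" using g0h0 jk by simp
    show "h0 b \<in> ?A 0" using b e1_h0[of b] h0_mod[of b] by simp
  qed
  have A1: "sum (w1::_\<Rightarrow>rat) (?A 1) = sum (\<lambda>p. w1 (h1 p)) ?F2"
  proof (rule sum.reindex_bij_witness[of _ h1 g1])
    fix a assume a: "a \<in> ?A 1"
    obtain n m where nm: "a = (n,m)" by (cases a)
    show "h1 (g1 a) = a" using a h1g1 nm by auto
    then show "g1 a \<in> ?F2" using a e1_h1[of "g1 a"] by simp
    show "w1 (h1 (g1 a)) = w1 a" using \<open>h1 (g1 a) = a\<close> by simp
  next
    fix b assume b: "b \<in> ?F2"
    obtain j k where jk: "b = (j,k)" by (cases b)
    show "g1 (h1 b) = b" using g1h1 jk by simp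
    show "h1 b \<in> ?A 1" using b e1_h1[of b] h1_mod[of b] by simp
  qed
  have A2: "sum (w1::_\<Rightarrow>rat) (?A 2) = 0"
  proof -
    have "sum (w1::_\<Rightarrow>rat) (?A 2) = sum (\<lambda>p. w1 (iota p)) (?A 2)"
    proof (rule sum.reindex_bij_witness[of _ iota iota])
      fix a assume a: "a \<in> ?A 2"
      obtain n m where nm: "a = (n,m)" by (cases a)
      have ii: "iota (iota a) = a" using a iota_facts(1) nm by auto
      show "iota (iota a) = a" by (rule ii)
      show "iota a \<in> ?A 2" using a iota_facts(2)[of m n] e1_iota[of a] nm by auto
      show "w1 (iota (iota a)) = w1 a" using ii by simp
    next
      fix a assume a: "a \<in> ?A 2"
      obtain n m where nm: "a = (n,m)" by (cases a)
      show "iota (iota a) = a" using a iota_facts(1) nm by auto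
      show "iota a \<in> ?A 2" using a iota_facts(2)[of m n] e1_iota[of a] nm by auto
    qed
    also have "\<dots> = - sum (w1::_\<Rightarrow>rat) (?A 2)"
      unfolding sum_negf[symmetric]
    proof (rule sum.cong[OF refl])
      fix a assume a: "a \<in> ?A 2"
      obtain n m where nm: "a = (n,m)" by (cases a)
      show "w1 (iota a) = - (w1 a :: rat)" using a iota_facts(3)[of m n] nm by auto
    qed
    finally show ?thesis by simp
  qed
  have "sum (w1::_\<Rightarrow>rat) ?F1 = sum (\<lambda>p. w1 (h0 p) + w1 (h1 p)) ?F2"
    using s1 A0 A1 A2 by (simp add: sum.distrib)
  also have "\<dots> = - sum w2 ?F2" by (simp add: w1_h01 sum_negf)
  finally show "G (w1 :: int \<times> int \<Rightarrow> rat) e1 $ M = (- G w2 e2) $ M" by (simp add: G_nth)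
qed


definition ph :: "nat \<Rightarrow> rat fps fps \<Rightarrow> rat fps" where
  "ph k F = Abs_fps (\<lambda>M. F $ M $ k)"

lemma ph_nth[simp]: "ph k F $ M = F $ M $ k" by (simp add: ph_def)

lemma ph_add[simp]: "ph k (F + H) = ph k F + ph k H" by (rule fps_ext) simp
lemma ph_diff[simp]: "ph k (F - H) = ph k F - ph k H" by (rule fps_ext) simp
lemma ph_uminus[simp]: "ph k (- F) = - ph k F" by (rule fps_ext) simp
lemma ph_one0[simp]: "ph 0 1 = 1" by (rule fps_ext) simp
lemma ph_one1[simp]: "ph 1 1 = 0" by (rule fps_ext) simp
lemma ph_const[simp]: "ph k (CC c) = CC (c $ k)" by (rule fps_ext) simp
lemma ph_Xp0[simp]: "ph 0 (XX^n) = XX^n" by (rule fps_ext) simp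
lemma ph_Xp1[simp]: "ph 1 (XX^n) = 0" by (rule fps_ext) simp

lemma ph_mult0: "ph 0 (F * H) = ph 0 F * ph 0 H"
  by (rule fps_ext) (simp add: fps_mult_nth fps_sum_nth)

lemma ph_mult1: "ph 1 (F * H) = ph 0 F * ph 1 H + ph 1 F * ph 0 H"
  by (rule fps_ext) (simp add: fps_mult_nth fps_sum_nth fps_mult_nth_1 sum.distrib)

lemma ph_prod0: "ph 0 (prod f S) = prod (\<lambda>i. ph 0 (f i)) S"
  by (induction S rule: infinite_finite_induct) (simp_all add: ph_mult0)

lemma ph_eqN: "eqN N F H \<Longrightarrow> eqN N (ph k F) (ph k H)"
  by (simp add: eqN_def)

lemma ph_G: "ph k (G w e) = G (\<lambda>x. w x $ k) e"
  by (rule fps_ext) (simp add: G_nth fps_sum_nth)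

lemma ph_qp0: "ph 0 (qp (XX^b) L) = qp (XX^b) L"
  by (induction L) (simp_all add: qp_Suc ph_mult0 XpowX)

lemma ph_qp1: "ph 1 (qp (XX^b) L) = 0"
proof (induction L)
  case 0 show ?case by (simp only: qp_0 ph_one1)
next
  case (Suc L)
  have "ph 1 (1 - (XX^b)^Suc L) = 0" by (simp only: ph_diff ph_one1 XpowX ph_Xp1) simp
  then show ?case by (simp only: qp_Suc ph_mult1 Suc.IH) simp
qed

lemma ph_jtp0: "ph 0 (jtpP b a c ci L) = jtpP b a (c$0) (ci$0) L"
  unfolding jtpP_def ph_prod0 by (simp add: ph_mult0)

lemma negpow: assumes "u $ 0 = (1::rat)"
  shows "((-u)^k) $ 0 = (-1)^k" "((-u)^k) $ 1 = (-1)^k * of_nat k * u $ 1"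
proof -
  have "((-u)^k) $ 0 = (-1)^k \<and> ((-u)^k) $ 1 = (-1)^k * of_nat k * u $ 1"
  proof (induction k)
    case 0 then show ?case by simp
  next
    case (Suc k)
    then show ?case using assms by (simp add: fps_mult_nth_1 algebra_simps)
  qed
  then show "((-u)^k) $ 0 = (-1)^k" "((-u)^k) $ 1 = (-1)^k * of_nat k * u $ 1" by auto
qed

definition zz :: "rat fps" where "zz = 1 + XX"
definition zi :: "rat fps" where "zi = inverse zz"

lemma zz0: "zz $ 0 = 1" and zz1: "zz $ 1 = 1" by (simp_all add: zz_def)
lemma zz_zi: "zz * zi = 1" unfolding zi_def by (rule inverse_mult_eq_1') (simp add: zz0)
lemma zi0: "zi $ 0 = 1"
proof -
  have "(zz * zi) $ 0 = 1" using zz_zi by simp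
  then show ?thesis using zz0 by simp
qed
lemma zi1: "zi $ 1 = -1"
proof -
  have "(zz * zi) $ 1 = 0" using zz_zi by simp
  then show ?thesis using zz0 zz1 zi0 by (simp add: fps_mult_nth_1)
qed
lemma zz2: "(zz^2) $ 0 = 1" "(zz^2) $ 1 = 2" using zz0 zz1 by (simp_all add: power2_eq_square fps_mult_nth_1)
lemma zi2: "(zi^2) $ 0 = 1" "(zi^2) $ 1 = -2" using zi0 zi1 by (simp_all add: power2_eq_square fps_mult_nth_1)

lemma sg_nat: "sg (int k) = ((-1)^k :: rat)" by (simp add: sg_def)
lemma sg_negnat: "sg (- int k) = ((-1)^k :: rat)" by (simp add: sg_def)

lemma ipowA: "ipow (-zi) (-zz) n $ 0 = sg n" "ipow (-zi) (-zz) n $ 1 = sg n * of_int (-n)"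
proof -
  have "ipow (-zi) (-zz) n $ 0 = sg n \<and> ipow (-zi) (-zz) n $ 1 = sg n * of_int (-n)"
  proof (cases "n \<ge> 0")
    case True
    then obtain k where k: "n = int k" by (metis nonneg_int_cases)
    show ?thesis using negpow[OF zi0, of k] zi1 unfolding ipow_def k by (simp add: sg_nat)
  next
    case False
    then obtain k where k: "n = - int k" by (metis le_cases neg_int_cases order_less_imp_le nonpos_int_cases)
    have "nat (- n) = k" using k by simp
    then show ?thesis using negpow[OF zz0, of k] zz1 False unfolding ipow_def k by (simp add: sg_negnat)
  qed
  then show "ipow (-zi) (-zz) n $ 0 = sg n" "ipow (-zi) (-zz) n $ 1 = sg n * of_int (-n)" by auto
qed

lemma ipowB: "ipow (-(zz^2)) (-(zi^2)) m $ 0 = sg m" "ipow (-(zz^2)) (-(zi^2)) m $ 1 = sg m * of_int (2*m)"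
proof -
  have "ipow (-(zz^2)) (-(zi^2)) m $ 0 = sg m \<and> ipow (-(zz^2)) (-(zi^2)) m $ 1 = sg m * of_int (2*m)"
  proof (cases "m \<ge> 0")
    case True
    then obtain k where k: "m = int k" by (metis nonneg_int_cases)
    show ?thesis using negpow[OF zz2(1), of k] zz2(2) unfolding ipow_def k by (simp add: sg_nat)
  next
    case False
    then obtain k where k: "m = - int k" by (metis le_cases neg_int_cases order_less_imp_le nonpos_int_cases)
    have "nat (- m) = k" using k by simp
    then show ?thesis using negpow[OF zi2(1), of k] zi2(2) False unfolding ipow_def k by (simp add: sg_negnat)
  qed
  then show "ipow (-(zz^2)) (-(zi^2)) m $ 0 = sg m" "ipow (-(zz^2)) (-(zi^2)) m $ 1 = sg m * of_int (2*m)" by auto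
qed

lemma sg_add: "sg (a + b) = (sg a * sg b :: rat)" by (simp add: sg_def)

lemma weight_AB: "(ipow (-zi) (-zz) n * ipow (-(zz^2)) (-(zi^2)) m) $ 1 = w1 (n,m)"
  by (simp only: fps_mult_nth_1 ipowA ipowB) (simp add: w1_def sg_add algebra_simps)


lemma cm1[simp]: "CC (-1::'a::comm_ring_1) = -1" by (rule fps_ext) simp

lemma ph_one1'[simp]: "ph (Suc 0) 1 = 0" by (rule fps_ext) simp
lemma ph_Xp1'[simp]: "ph (Suc 0) (XX^n) = 0" by (rule fps_ext) simp

lemma ph_X0[simp]: "ph 0 XX = XX" by (rule fps_ext) simp
lemma ph_X1[simp]: "ph (Suc 0) XX = 0" by (rule fps_ext) simp

lemma qp_shift: "qp (XX::'a::comm_ring_1 fps) L = (\<Prod>k<L. 1 - XX^(k+1))"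
  unfolding qp_def using prod.atLeast1_atMost_eq[of "\<lambda>j. 1 - (XX::'a fps)^j" L] by simp

definition oddp :: "nat \<Rightarrow> 'a::comm_ring_1 fps" where
  "oddp L = (\<Prod>k<L. 1 - XX^(2*k+1))"

lemma odd_even: "oddp L * qp ((XX::'a::comm_ring_1 fps)^2) L = qp XX (2*L)"
proof (induction L)
  case 0 then show ?case by (simp add: oddp_def)
next
  case (Suc L)
  have e1: "2 * Suc L = Suc (Suc (2*L))" by simp
  have a: "qp (XX::'a fps) (2 * Suc L) = qp XX (2*L) * (1 - XX^(Suc (2*L))) * (1 - XX^(Suc (Suc (2*L))))"
    by (simp only: e1 qp_Suc)
  have b: "qp ((XX::'a fps)^2) (Suc L) = qp (XX^2) L * (1 - XX^(Suc (Suc (2*L))))"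
    by (simp only: qp_Suc XpowX e1)
  have c: "oddp (Suc L) = oddp L * (1 - (XX::'a fps)^(Suc (2*L)))"
    by (simp add: oddp_def)
  show ?case unfolding a b c Suc.IH[symmetric] by (simp only: ac_simps)
qed

lemma euler_group: "qp ((XX::'a::comm_ring_1 fps)^6) L * jtpP 6 2 (-1) (-1) L = qp (XX^2) (3*L)"
proof (induction L)
  case 0 then show ?case by (simp add: jtpP_def)
next
  case (Suc L)
  have e6: "6 * Suc L = 2 * Suc (Suc (Suc (3*L)))" "3 * Suc L = Suc (Suc (Suc (3*L)))" by simp_all
  have j: "jtpP 6 2 (-1) (-1) (Suc L) = jtpP 6 2 (-1) (-1) L * ((1 - XX^(6*(L+1)-2)) * (1 - (XX::'a fps)^(6*L+2)))"
    by (simp add: jtpP_def)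
  have e7: "6*(L+1)-2 = 2 * Suc (Suc (3*L))" "6*L+2 = 2 * Suc (3*L)" by simp_all
  have q3: "qp ((XX::'a fps)^2) (3 * Suc L) = qp (XX^2) (3*L) * (1 - XX^(2 * Suc (3*L))) * (1 - XX^(2*Suc (Suc (3*L)))) * (1 - XX^(2 * Suc (Suc (Suc (3*L)))))"
    by (simp only: e6(2) qp_Suc XpowX)
  have q6: "qp ((XX::'a fps)^6) (Suc L) = qp (XX^6) L * (1 - XX^(2 * Suc (Suc (Suc (3*L)))))"
    by (simp only: qp_Suc XpowX e6(1))
  show ?case unfolding j q3 q6 e7 Suc.IH[symmetric] by (simp only: ac_simps)
qed

lemma jtpB0: "jtpP 2 1 (-1) (-1) L = (oddp L :: 'a::comm_ring_1 fps)^2"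
  unfolding jtpP_def oddp_def power2_eq_square prod.distrib[symmetric]
  by (rule prod.cong) (simp_all add: fps_const_neg)

lemma jtpA_split: "jtpP 1 0 c ci (Suc L) = (1 + CC ci) * ((1 + CC c * XX) * (\<Prod>k<L. (1 + CC c * XX^(k+2)) * (1 + CC ci * XX^(k+1))))"
  unfolding jtpP_def by (subst prod.lessThan_Suc_shift) (simp add: ac_simps)

lemma phA1: "ph 1 (jtpP 1 0 (-zi) (-zz) (Suc L)) = - (qp XX (Suc L) * qp XX L)"
proof -
  let ?R = "(1 + CC (-zi) * XX) * (\<Prod>k<L. (1 + CC (-zi) * XX^(k+2)) * (1 + CC (-zz) * XX^(k+1)))"
  have a0: "ph 0 (1 + CC (-zz)) = 0" using zz0 by simp
  have a1: "ph 1 (1 + CC (-zz)) = -1" using zz1 by (simp add: fps_const_neg)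
  have r0: "ph 0 ?R = (1 - XX) * (\<Prod>k<L. (1 - XX^(k+2)) * (1 - XX^(k+1)))"
    unfolding ph_mult0 ph_prod0 using zi0 zz0 by (simp add: ph_mult0 fps_const_neg)
  also have "\<dots> = qp XX (Suc L) * qp XX L"
    unfolding qp_shift prod.distrib by (subst prod.lessThan_Suc_shift) (simp add: ac_simps)
  finally have r0': "ph 0 ?R = qp XX (Suc L) * qp XX L" .
  show ?thesis unfolding jtpA_split ph_mult1 a0 a1 r0' by simp
qed

lemma phA0: "ph 0 (jtpP 1 0 (-zi) (-zz) (Suc L)) = 0"
proof -
  have a0: "ph 0 (1 + CC (-zz)) = 0" using zz0 by simp
  show ?thesis unfolding jtpA_split ph_mult0 a0 by simp
qed

lemma phB0: "ph 0 (jtpP 2 1 (-(zz^2)) (-(zi^2)) L) = oddp L ^ 2"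
  unfolding ph_jtp0 using zz2(1) zi2(1) jtpB0 by simp

lemma ph1_whole:
  "ph 1 ((qp (XX^1) (Suc L) * jtpP 1 0 (-zi) (-zz) (Suc L)) * (qp (XX^2) (Suc L) * jtpP 2 1 (-(zz^2)) (-(zi^2)) (Suc L)))
   = - (qp XX (Suc L) * (qp XX (Suc L) * qp XX L) * qp (XX^2) (Suc L) * oddp (Suc L) ^ 2)"
proof -
  have q1: "ph 0 (qp (XX^1) (Suc L)) = qp XX (Suc L)" "ph 1 (qp (XX^1) (Suc L)) = 0"
    using ph_qp0[of 1] ph_qp1[of 1] by simp_all
  show ?thesis
    unfolding ph_mult1 ph_mult0 q1 ph_qp0 ph_qp1 phA1 phA0 phB0 by (simp add: ac_simps)
qed


lemma ipow_m1: "ipow (-1) (-1) = (sg :: int \<Rightarrow> 'a::comm_ring_1)"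
proof
  fix k :: int
  show "ipow (-1) (-1) k = sg k"
  proof (cases "k \<ge> 0")
    case True
    then obtain n where "k = int n" by (metis nonneg_int_cases)
    then show ?thesis by (simp add: ipow_def sg_def)
  next
    case False
    then obtain n where "k = - int n" by (metis le_cases neg_int_cases order_less_imp_le nonpos_int_cases)
    then show ?thesis using False by (simp add: ipow_def sg_def)
  qed
qed

lemma je_nonneg: "a < b \<Longrightarrow> je b a k \<ge> 0" by (rule je_bound(1))

lemma qp_eqN1: "N \<le> k \<Longrightarrow> eqN N (qp (XX::'a::comm_ring_1 fps) k) (qp XX N)"
  using qp_eqN[of 1 N k] by simp

lemma qp_X0_1: "(qp (XX::'a::comm_ring_1 fps) k) $ 0 = 1"
  using qp_X_0[of 1 k] by simp

lemma S_id: "eqN N ((qp XX N)^5) ((qp (XX^2) N)^2 * G (\<lambda>k. of_int (6*k+1) :: rat) (je 3 1))"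
proof -
  define L' where "L' = 2*N+1"
  have L: "Suc L' \<ge> 2*N+2" unfolding L'_def by simp
  let ?L = "Suc L'"
  let ?GS = "G (\<lambda>k. of_int (6*k+1) :: rat) (je 3 1)"
  let ?GE = "G (sg :: int \<Rightarrow> rat) (je 6 2)"
  let ?iA = "ipow (-zi) (-zz)" and ?iB = "ipow (-(zz^2)) (-(zi^2))"
  have ccA: "(-zi) * (-zz) = 1" using zz_zi by (simp add: mult.commute)
  have ccB: "(-(zz^2)) * (-(zi^2)) = 1" using zz_zi by (simp add: power_mult_distrib[symmetric])
  have hA: "eqN N (qp (XX^1) ?L * jtpP 1 0 (-zi) (-zz) ?L) (G ?iA (je 1 0))"
    by (rule jtp_trunc[OF ccA _ L]) simp
  have hB: "eqN N (qp (XX^2) ?L * jtpP 2 1 (-(zz^2)) (-(zi^2)) ?L) (G ?iB (je 2 1))"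
    by (rule jtp_trunc[OF ccB _ L]) simp
  have GAB: "G ?iA (je 1 0) * G ?iB (je 2 1) = G (\<lambda>(x,y). ?iA x * ?iB y) (\<lambda>(x,y). je 1 0 x + je 2 1 y)"
    by (rule G_mult) (simp_all add: je_nonneg je_fiber_finite)
  have w: "(\<lambda>p. (case p of (x,y) \<Rightarrow> ?iA x * ?iB y) $ 1) = (w1 :: int \<times> int \<Rightarrow> rat)"
  proof
    fix p :: "int \<times> int" show "(case p of (x,y) \<Rightarrow> ?iA x * ?iB y) $ 1 = w1 p"
      by (cases p) (simp only: weight_AB prod.case)
  qed
  have e: "(\<lambda>(x,y). je 1 0 x + je 2 1 y) = e1"
  proof
    fix p :: "int \<times> int" show "(case p of (x,y) \<Rightarrow> je 1 0 x + je 2 1 y) = e1 p"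
      by (cases p) (simp add: e1_def)
  qed
  have ph1G: "ph 1 (G ?iA (je 1 0) * G ?iB (je 2 1)) = G w1 e1"
    unfolding GAB ph_G w e ..
  have w2e: "(\<lambda>(x,y). sg x * of_int (6*y+1)) = (w2 :: int \<times> int \<Rightarrow> rat)"
  proof
    fix p :: "int \<times> int" show "(case p of (x,y) \<Rightarrow> sg x * of_int (6*y+1)) = (w2 p :: rat)"
      by (cases p) (simp add: w2_def)
  qed
  have e2e: "(\<lambda>(x,y). je 6 2 x + je 3 1 y) = e2"
  proof
    fix p :: "int \<times> int" show "(case p of (x,y) \<Rightarrow> je 6 2 x + je 3 1 y) = e2 p"
      by (cases p) (simp add: e2_def)
  qed
  have GES: "?GE * ?GS = G w2 e2"
    unfolding w2e[symmetric] e2e[symmetric]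
    by (rule G_mult) (simp_all add: je_nonneg je_fiber_finite)
  have eul: "eqN N (qp (XX^2) (3 * ?L)) ?GE"
    using jtp_trunc[of "-1::rat" "-1" 2 6 N ?L] L unfolding euler_group ipow_m1 by simp
  have main0: "eqN N (ph 1 ((qp (XX^1) ?L * jtpP 1 0 (-zi) (-zz) ?L) * (qp (XX^2) ?L * jtpP 2 1 (-(zz^2)) (-(zi^2)) ?L)))
        (ph 1 (G ?iA (je 1 0) * G ?iB (je 2 1)))"
    by (rule ph_eqN, rule eqN_mult[OF hA hB])
  then have "eqN N (- (qp XX ?L * (qp XX ?L * qp XX L') * qp (XX^2) ?L * oddp ?L ^ 2)) (- (?GE * ?GS))"
    unfolding ph1_whole ph1G stepB GES .
  then have m1: "eqN N (qp XX ?L * (qp XX ?L * qp XX L') * qp (XX^2) ?L * oddp ?L ^ 2) (?GE * ?GS)"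
    by (simp add: eqN_def)
  have m2: "eqN N (qp XX ?L * (qp XX ?L * qp XX L') * qp (XX^2) ?L * oddp ?L ^ 2) (qp (XX^2) (3 * ?L) * ?GS)"
    using eqN_trans[OF m1 eqN_mult[OF eqN_sym[OF eul] eqN_refl]] .
  have m3: "eqN N (qp XX ?L * (qp XX ?L * qp XX L') * qp (XX^2) ?L * (oddp ?L * qp (XX^2) ?L) ^ 2)
        (qp (XX^2) (3 * ?L) * ?GS * qp (XX^2) ?L ^ 2)"
  proof -
    have "eqN N (qp XX ?L * (qp XX ?L * qp XX L') * qp (XX^2) ?L * oddp ?L ^ 2 * qp (XX^2) ?L ^ 2)
        (qp (XX^2) (3 * ?L) * ?GS * qp (XX^2) ?L ^ 2)"
      by (rule eqN_mult[OF m2 eqN_refl])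
    then show ?thesis by (simp only: power_mult_distrib ac_simps)
  qed
  have N1: "N \<le> ?L" "N \<le> L'" "N \<le> 2 * ?L" "N \<le> 3 * ?L" using L unfolding L'_def by simp_all
  let ?E1 = "qp (XX::rat fps) N" and ?E2 = "qp ((XX::rat fps)^2) N"
  have l1: "eqN N (qp XX ?L * (qp XX ?L * qp XX L') * qp (XX^2) ?L * (oddp ?L * qp (XX^2) ?L) ^ 2)
      (?E1 * (?E1 * ?E1) * ?E2 * ?E1 ^ 2)"
    unfolding odd_even
    by (intro eqN_mult eqN_power qp_eqN1 qp_eqN N1) simp_all
  have r1: "eqN N (qp (XX^2) (3 * ?L) * ?GS * qp (XX^2) ?L ^ 2) (?E2 * ?GS * ?E2 ^ 2)"
    by (intro eqN_mult eqN_power qp_eqN1 qp_eqN N1 eqN_refl) simp_all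
  have "eqN N (?E1 * (?E1 * ?E1) * ?E2 * ?E1 ^ 2) (?E2 * ?GS * ?E2 ^ 2)"
    using eqN_trans[OF eqN_trans[OF eqN_sym[OF l1] m3] r1] .
  then have "eqN N (?E2 * ?E1^5) (?E2 * (?E2^2 * ?GS))"
    by (simp add: eqN_def ac_simps numeral_eq_Suc)
  moreover have c0: "?E2 $ 0 = 1" by (rule qp_X_0) simp
  ultimately show ?thesis using eqN_cancel_mult[OF c0] by blast
qed


definition pz :: "nat \<Rightarrow> rat \<Rightarrow> bool" where "pz p x \<longleftrightarrow> (\<exists>m::int. x = of_int (int p * m))"
definition intg :: "rat fps \<Rightarrow> bool" where "intg f \<longleftrightarrow> (\<forall>i. f $ i \<in> \<int>)"
definition pdv :: "nat \<Rightarrow> rat fps \<Rightarrow> bool" where "pdv p f \<longleftrightarrow> (\<forall>i. pz p (f $ i))"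

lemma pz_0[simp]: "pz p 0" unfolding pz_def by (rule exI[of _ 0]) simp
lemma pz_add: assumes "pz p x" "pz p y" shows "pz p (x + y)"
proof -
  obtain a b where "x = of_int (int p * a)" "y = of_int (int p * b)" using assms unfolding pz_def by blast
  then show ?thesis unfolding pz_def by (intro exI[of _ "a+b"]) (simp add: algebra_simps)
qed
lemma pz_uminus: assumes "pz p x" shows "pz p (- x)"
proof -
  obtain a where "x = of_int (int p * a)" using assms unfolding pz_def by blast
  then show ?thesis unfolding pz_def by (intro exI[of _ "-a"]) (simp add: algebra_simps)
qed
lemma pz_diff: "pz p x \<Longrightarrow> pz p y \<Longrightarrow> pz p (x - y)"
  using pz_add[of p x "-y"] pz_uminus[of p y] by simp
lemma pz_mult_Ints: assumes "pz p x" "y \<in> \<int>" shows "pz p (x * y)"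
proof -
  obtain a where a: "x = of_int (int p * a)" using assms unfolding pz_def by blast
  obtain b where b: "y = of_int b" using assms(2) by (auto elim: Ints_cases)
  show ?thesis unfolding pz_def a b by (intro exI[of _ "a*b"]) (simp add: algebra_simps)
qed
lemma pz_Ints_mult: "y \<in> \<int> \<Longrightarrow> pz p x \<Longrightarrow> pz p (y * x)"
  using pz_mult_Ints[of p x y] by (simp add: mult.commute)
lemma pz_sum: "(\<And>i. i \<in> S \<Longrightarrow> pz p (f i)) \<Longrightarrow> pz p (sum f S)"
  by (induction S rule: infinite_finite_induct) (auto intro: pz_add)
lemma pz_Ints: "pz p x \<Longrightarrow> x \<in> \<int>" unfolding pz_def by auto

lemma intg_add: "intg f \<Longrightarrow> intg g \<Longrightarrow> intg (f + g)" unfolding intg_def by auto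
lemma intg_diff: "intg f \<Longrightarrow> intg g \<Longrightarrow> intg (f - g)" unfolding intg_def by auto
lemma intg_uminus: "intg f \<Longrightarrow> intg (- f)" unfolding intg_def by auto
lemma intg_mult: "intg f \<Longrightarrow> intg g \<Longrightarrow> intg (f * g)"
  unfolding intg_def fps_mult_nth by (auto intro!: Ints_sum Ints_mult)
lemma intg_one[simp]: "intg 1" unfolding intg_def by simp
lemma intg_Xp[simp]: "intg (XX^n)" unfolding intg_def by simp
lemma intg_X[simp]: "intg XX" unfolding intg_def by simp
lemma intg_prod: "(\<And>i. i \<in> S \<Longrightarrow> intg (f i)) \<Longrightarrow> intg (prod f S)"
  by (induction S rule: infinite_finite_induct) (auto intro: intg_mult)
lemma intg_power: "intg f \<Longrightarrow> intg (f ^ k)"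
  by (induction k) (auto intro: intg_mult)
lemma intg_qp: "intg (qp (XX^b) N)"
  unfolding qp_def by (intro intg_prod intg_diff intg_one) (simp add: XpowX)

lemma intg_inverse:
  assumes f: "intg f" and f0: "f $ 0 = 1" shows "intg (inverse f)"
proof -
  have "inverse f $ i \<in> \<int>" for i
  proof (induction i rule: less_induct)
    case (less i)
    show ?case
    proof (cases "i = 0")
      case True then show ?thesis using f0 by simp
    next
      case False
      have "(f * inverse f) $ i = 0" using False f0 by (simp add: inverse_mult_eq_1')
      also have "(f * inverse f) $ i = (\<Sum>j=0..i. f$j * inverse f $ (i-j))" by (rule fps_mult_nth)
      also have "\<dots> = f$0 * inverse f $ i + (\<Sum>j=1..i. f$j * inverse f $ (i-j))"
        by (simp add: sum.atLeast_Suc_atMost)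
      finally have "inverse f $ i = - (\<Sum>j=1..i. f$j * inverse f $ (i-j))" using f0 by (simp add: eq_neg_iff_add_eq_0)
      moreover have "(\<Sum>j=1..i. f$j * inverse f $ (i-j)) \<in> \<int>"
        using f less False unfolding intg_def by (intro Ints_sum Ints_mult) auto
      ultimately show ?thesis by simp
    qed
  qed
  then show ?thesis unfolding intg_def by blast
qed

lemma pdv_add: "pdv p f \<Longrightarrow> pdv p g \<Longrightarrow> pdv p (f + g)" unfolding pdv_def by (auto intro: pz_add)
lemma pdv_diff: "pdv p f \<Longrightarrow> pdv p g \<Longrightarrow> pdv p (f - g)" unfolding pdv_def by (auto intro: pz_diff)
lemma pdv_uminus: "pdv p f \<Longrightarrow> pdv p (- f)" unfolding pdv_def by (auto intro: pz_uminus)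
lemma pdv_intg: "pdv p f \<Longrightarrow> intg f" unfolding pdv_def intg_def by (auto intro: pz_Ints)
lemma pdv_mult_right: "pdv p f \<Longrightarrow> intg g \<Longrightarrow> pdv p (f * g)"
  unfolding pdv_def intg_def fps_mult_nth by (auto intro!: pz_sum pz_mult_Ints)
lemma pdv_mult_left: "intg g \<Longrightarrow> pdv p f \<Longrightarrow> pdv p (g * f)"
  using pdv_mult_right[of p f g] by (simp add: mult.commute)
lemma pdv_sum: "(\<And>i. i \<in> S \<Longrightarrow> pdv p (f i)) \<Longrightarrow> pdv p (sum f S)"
  unfolding pdv_def fps_sum_nth by (auto intro!: pz_sum)

lemma cong_mult:
  assumes "pdv p (a - b)" "pdv p (a' - b')" "intg a'" "intg b"
  shows "pdv p (a * a' - b * b')"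
proof -
  have "a * a' - b * b' = (a - b) * a' + b * (a' - b')" by (simp add: algebra_simps)
  then show ?thesis using assms by (simp add: pdv_add pdv_mult_right pdv_mult_left)
qed

lemma cong_prod:
  assumes "\<And>i. i \<in> S \<Longrightarrow> pdv p (a i - b i)" "\<And>i. i \<in> S \<Longrightarrow> intg (a i)" "\<And>i. i \<in> S \<Longrightarrow> intg (b i)"
  shows "pdv p (prod a S - prod b S)"
  using assms
proof (induction S rule: infinite_finite_induct)
  case (insert x F)
  have "pdv p (a x * prod a F - b x * prod b F)"
    using insert by (intro cong_mult intg_prod) auto
  then show ?case using insert by simp
qed (simp_all add: pdv_def)

lemma cong_power:
  assumes "pdv p (a - b)" "intg a" "intg b"
  shows "pdv p (a^k - b^k)"
proof (induction k)
  case 0 then show ?case by (simp add: pdv_def)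
next
  case (Suc k)
  have "pdv p (a * a^k - b * b^k)" using Suc assms by (intro cong_mult intg_power) auto
  then show ?case by simp
qed

lemma cong_inverse:
  assumes "pdv p (f - g)" "intg f" "intg g" "f $ 0 = 1" "g $ 0 = 1"
  shows "pdv p (inverse f - inverse g)"
proof -
  have "inverse f - inverse g = (inverse f * inverse g) * (g - f)"
    using assms(4,5) by (simp add: algebra_simps inverse_mult_eq_1 inverse_mult_eq_1' mult.assoc[symmetric])
  moreover have "pdv p (g - f)" using pdv_uminus[OF assms(1)] by simp
  ultimately show ?thesis using assms
    by (simp add: pdv_mult_left intg_mult intg_inverse)
qed

lemma frob:
  assumes p: "prime p" and f: "intg f" and g: "intg g"
  shows "pdv p ((f + g)^p - (f^p + g^p))"
proof -
  have p0: "p \<noteq> 0" using p by auto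
  have "(f + g)^p = (\<Sum>k\<le>p. of_nat (p choose k) * f^k * g^(p-k))" by (rule binomial_ring)
  also have "\<dots> = (\<Sum>k\<in>{1..<p}. of_nat (p choose k) * f^k * g^(p-k)) + (f^p + g^p)"
  proof -
    have s: "{..p} = insert 0 (insert p {1..<p})" using p0 by auto
    show ?thesis unfolding s using p0 by (simp add: algebra_simps)
  qed
  finally have e: "(f + g)^p - (f^p + g^p) = (\<Sum>k\<in>{1..<p}. of_nat (p choose k) * f^k * g^(p-k))" by simp
  have "pdv p (of_nat (p choose k) * f^k * g^(p-k))" if k: "k \<in> {1..<p}" for k
  proof -
    obtain c where c: "p choose k = p * c" using dvd_choose_prime[of k p] k p0 p by (auto elim!: dvdE)
    have "pdv p (of_nat (p choose k) :: rat fps)"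
      unfolding pdv_def pz_def c
      by (auto intro!: exI[of _ "if _ = 0 then int c else 0"] simp: of_nat_mult)
    then show ?thesis using f g by (intro pdv_mult_right intg_power) auto
  qed
  then show ?thesis unfolding e by (rule pdv_sum)
qed

lemma frob_factor:
  assumes p: "prime p" "odd p"
  shows "pdv p ((1 - XX^m)^p - (1 - XX^(p*m)))"
proof -
  have "pdv p ((1 + (- (XX^m)))^p - (1^p + (- ((XX::rat fps)^m))^p))"
    by (rule frob[OF p(1)]) (simp_all add: intg_uminus)
  moreover have "(- ((XX::rat fps)^m))^p = - (XX^(p*m))"
    using p(2) by (simp add: power_minus_odd power_mult[symmetric] mult.commute)
  ultimately show ?thesis by simp
qed

lemma frob_qp:
  assumes p: "prime p" "odd p"
  shows "pdv p ((qp (XX^r) N)^p - qp (XX^(r*p)) N)"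
proof -
  have a: "(qp ((XX::rat fps)^r) N)^p = (\<Prod>i\<in>{1..N}. (1 - XX^(r*i))^p)"
    unfolding qp_def prod_power_distrib by (simp add: XpowX)
  have b: "qp ((XX::rat fps)^(r*p)) N = (\<Prod>i\<in>{1..N}. 1 - XX^(p*(r*i)))"
    unfolding qp_def by (simp add: XpowX ac_simps)
  show ?thesis unfolding a b
    by (rule cong_prod) (auto intro!: frob_factor[OF p] intg_power intg_diff)
qed


definition sparse :: "nat \<Rightarrow> rat fps \<Rightarrow> bool" where
  "sparse p f \<longleftrightarrow> (\<forall>i. \<not> p dvd i \<longrightarrow> f $ i = 0)"

lemma sparse_mult: assumes "sparse p f" "sparse p g" shows "sparse p (f * g)"
  unfolding sparse_def
proof (intro allI impI)
  fix i assume i: "\<not> p dvd i"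
  have "f $ j * g $ (i - j) = 0" if "j \<in> {0..i}" for j
  proof (cases "p dvd j")
    case True
    have ij: "i = (i - j) + j" using that by simp
    have "\<not> p dvd (i - j)"
    proof
      assume "p dvd (i - j)"
      then have "p dvd (i - j) + j" using True by (rule dvd_add)
      then show False using ij i by simp
    qed
    then show ?thesis using assms(2) unfolding sparse_def by simp
  next
    case False then show ?thesis using assms(1) unfolding sparse_def by simp
  qed
  then show "(f * g) $ i = 0" unfolding fps_mult_nth by (intro sum.neutral) auto
qed

lemma sparse_one[simp]: "sparse p 1" unfolding sparse_def by auto
lemma sparse_diff: "sparse p f \<Longrightarrow> sparse p g \<Longrightarrow> sparse p (f - g)" unfolding sparse_def by auto
lemma sparse_Xp: "p dvd k \<Longrightarrow> sparse p (XX^k)" unfolding sparse_def by auto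
lemma sparse_prod: "(\<And>i. i \<in> S \<Longrightarrow> sparse p (f i)) \<Longrightarrow> sparse p (prod f S)"
  by (induction S rule: infinite_finite_induct) (auto intro: sparse_mult)
lemma sparse_power: "sparse p f \<Longrightarrow> sparse p (f ^ k)"
  by (induction k) (auto intro: sparse_mult)
lemma sparse_qp: "sparse p (qp (XX^(r*p)) N)"
  unfolding qp_def by (intro sparse_prod sparse_diff sparse_one) (simp add: XpowX sparse_Xp)

lemma sparse_inverse:
  assumes f: "sparse p f" and f0: "f $ 0 = 1" shows "sparse p (inverse f)"
proof -
  have "\<not> p dvd i \<longrightarrow> inverse f $ i = 0" for i
  proof (induction i rule: less_induct)
    case (less i)
    show ?case
    proof
      assume pi: "\<not> p dvd i"
      have i0: "i \<noteq> 0"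
      proof
        assume "i = 0" then show False using pi by simp
      qed
      have "(f * inverse f) $ i = 0" using i0 f0 by (simp add: inverse_mult_eq_1')
      also have "(f * inverse f) $ i = (\<Sum>j=0..i. f$j * inverse f $ (i-j))" by (rule fps_mult_nth)
      also have "\<dots> = f$0 * inverse f $ i + (\<Sum>j=1..i. f$j * inverse f $ (i-j))"
        by (simp add: sum.atLeast_Suc_atMost)
      also have "(\<Sum>j=1..i. f$j * inverse f $ (i-j)) = 0"
      proof (rule sum.neutral, rule ballI)
        fix j assume j: "j \<in> {1..i}"
        show "f$j * inverse f $ (i-j) = 0"
        proof (cases "p dvd j")
          case True
          have ij: "i = (i - j) + j" using j by simp
          have "\<not> p dvd (i - j)"
          proof
            assume "p dvd (i - j)"
            then have "p dvd (i - j) + j" using True by (rule dvd_add)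
            then show False using ij pi by simp
          qed
          moreover have "i - j < i" using j by auto
          ultimately show ?thesis using less by simp
        next
          case False then show ?thesis using f unfolding sparse_def by simp
        qed
      qed
      finally show "inverse f $ i = 0" using f0 by simp
    qed
  qed
  then show ?thesis unfolding sparse_def by blast
qed

definition GS :: "rat fps" where "GS = G (\<lambda>k. of_int (6*k+1)) (je 3 1)"

lemma intg_GS: "intg GS"
  unfolding intg_def GS_def G_nth by (intro allI Ints_sum) simp

lemma GS_pz:
  assumes p: "prime p" and dv: "int p dvd 24 * int M + 1"
  shows "pz p (GS $ M)"
  unfolding GS_def G_nth
proof (rule pz_sum)
  fix k assume "k \<in> {k. je 3 1 k = int M}"
  then have k: "je 3 1 k = int M" by simp
  have "2 * je 3 1 k = 3 * (k*(k+1)) - 2*k" using je_2[of 3 1 k] by simp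
  then have m2: "2 * int M = 3 * (k*(k+1)) - 2*k" using k by simp
  have "24 * int M + 1 = 12 * (2 * int M) + 1" by simp
  also have "\<dots> = 12 * (3 * (k*(k+1)) - 2*k) + 1" by (simp only: m2)
  also have "\<dots> = (6*k+1)^2" by (simp add: power2_eq_square algebra_simps)
  finally have "24 * int M + 1 = (6*k+1)^2" .
  then have "int p dvd (6*k+1)^2" using dv by simp
  moreover have "prime (int p)" using p by simp
  ultimately have "int p dvd 6*k+1" using prime_dvd_power[of "int p" "6*k+1" 2] by blast
  then obtain c where "6*k+1 = int p * c" by (auto elim: dvdE)
  then show "pz p (of_int (6*k+1))" unfolding pz_def by auto
qed

lemma ftq: "f_trunc N r = qp (XX^r) N"
  unfolding f_trunc_def qp_def by (simp add: XpowX)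

lemma qp0': "(qp ((XX::rat fps)^r) N) $ 0 = 1 \<or> r = 0"
  using qp_X_0[of r N] by (cases r) auto


lemma qp_pow0: assumes "b \<ge> 1" shows "((qp ((XX::rat fps)^b) N)^k) $ 0 = 1"
proof -
  have h: "qp ((XX::rat fps)^b) N $ 0 = 1" using qp_X_0[OF assms] .
  show ?thesis by (simp only: fps_nth_power_0 h power_one)
qed

theorem theorem4p2:
  fixes p t n :: nat
  assumes "prime p" and "p \<ge> 5"
    and "1 \<le> t" and "t \<le> p - 1" and "p dvd 24 * t + 1"
  shows "\<exists>m::int. d (p - 2) (p * n + t) = of_int (int p * m)"
proof -
  note p = assms(1)
  have p5: "p \<ge> 5" by fact
  have podd: "odd p" using p p5 by (intro prime_odd_nat) simp_all
  define N where "N = p * n + t"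
  let ?E1 = "qp (XX::rat fps) N" and ?E2 = "qp ((XX::rat fps)^2) N"
  let ?Ep = "qp ((XX::rat fps)^p) N" and ?E2p = "qp ((XX::rat fps)^(2*p)) N"
  define K where "K = 3 * (p - 2) + 1"
  define V where "V = inverse (?E1^(3*p))"
  define W where "W = inverse (?Ep^3)"
  have E10: "?E1 $ 0 = 1" using qp_X0_1 .
  have E1k0: "(?E1^k) $ 0 = 1" for k using E10 by (simp add: fps_nth_power_0)
  have Kp: "K + 5 = 3 * p" unfolding K_def using p5 by simp
  have invK: "inverse (?E1^K) = ?E1^5 * V"
  proof -
    have "V = inverse (?E1^K * ?E1^5)" unfolding V_def Kp[symmetric] by (simp add: power_add)
    also have "\<dots> = inverse (?E1^K) * inverse (?E1^5)" by (rule fps_inverse_mult)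
    finally have "?E1^5 * V = inverse (?E1^K) * (?E1^5 * inverse (?E1^5))" by (simp add: ac_simps)
    also have "?E1^5 * inverse (?E1^5) = 1" by (rule inverse_mult_eq_1') (simp add: E1k0)
    finally show ?thesis by simp
  qed
  have dN: "d (p - 2) N = (?E2^(p-2) * ?E1^5 * V) $ N"
    unfolding d_def ftq K_def[symmetric] using invK by (simp add: ac_simps)
  have "eqN N (?E2^(p-2) * ?E1^5 * V) (?E2^(p-2) * (?E2^2 * GS) * V)"
    using S_id[of N] unfolding GS_def by (intro eqN_mult eqN_refl)
  moreover have "?E2^(p-2) * (?E2^2 * GS) * V = ?E2^p * V * GS"
  proof -
    have "p - 2 + 2 = p" using p5 by simp
    then have pw: "?E2^(p-2) * ?E2^2 = ?E2^p" by (simp only: power_add[symmetric])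
    have "?E2^(p-2) * (?E2^2 * GS) * V = (?E2^(p-2) * ?E2^2) * V * GS" by (simp only: ac_simps)
    then show ?thesis by (simp only: pw)
  qed
  ultimately have dN2: "d (p - 2) N = (?E2^p * V * GS) $ N" using dN unfolding eqN_def by simp
  have c1: "pdv p (?E2^p - ?E2p)" using frob_qp[OF p podd, of 2 N] by (simp add: mult.commute)
  have c2: "pdv p (?E1^p - ?Ep)" using frob_qp[OF p podd, of 1 N] by simp
  have c3: "pdv p (?E1^(3*p) - ?Ep^3)"
  proof -
    have "pdv p ((?E1^p)^3 - ?Ep^3)" by (rule cong_power[OF c2]) (simp_all add: intg_power intg_qp[of 1, simplified] intg_qp)
    then show ?thesis by (simp add: power_mult[symmetric] mult.commute)
  qed
  have iE1: "intg ?E1" using intg_qp[of 1 N] by simp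
  have Ep0: "(?Ep^3) $ 0 = 1" using p5 by (intro qp_pow0) simp
  have c4: "pdv p (V - W)" unfolding V_def W_def
    by (rule cong_inverse[OF c3]) (simp_all only: intg_power iE1 intg_qp E1k0 Ep0)
  have iV: "intg V" unfolding V_def by (intro intg_inverse intg_power iE1) (simp add: E1k0)
  have iW: "intg W" unfolding W_def by (intro intg_inverse intg_power intg_qp Ep0)
  have c5: "pdv p (?E2^p * V - ?E2p * W)"
    by (rule cong_mult[OF c1 c4 iV]) (simp add: intg_qp)
  have c6: "pdv p (?E2^p * V * GS - ?E2p * W * GS)"
    using pdv_mult_right[OF c5 intg_GS] by (simp add: algebra_simps)
  have z1: "pz p ((?E2^p * V * GS) $ N - (?E2p * W * GS) $ N)"
    using c6 unfolding pdv_def by simp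
  have sH: "sparse p (?E2p * W)"
  proof -
    have "sparse p ?E2p" using sparse_qp[of p 2 N] by (simp add: mult.commute)
    moreover have "sparse p W" unfolding W_def
      using sparse_qp[of p 1 N] by (intro sparse_inverse sparse_power Ep0) simp
    ultimately show ?thesis by (rule sparse_mult)
  qed
  have iH: "intg (?E2p * W)" by (intro intg_mult iW intg_qp)
  have z2: "pz p ((?E2p * W * GS) $ N)"
    unfolding fps_mult_nth[of "?E2p * W"]
  proof (rule pz_sum)
    fix i assume i: "i \<in> {0..N}"
    show "pz p ((?E2p * W) $ i * GS $ (N - i))"
    proof (cases "p dvd i")
      case False
      then show ?thesis using sH unfolding sparse_def by simp
    next
      case True
      then obtain c where c: "i = p * c" by (auto elim: dvdE)
      have iN: "i \<le> N" using i by simp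
      have "int (N - i) = int p * int n + int t - int p * int c" using iN c unfolding N_def by (simp add: of_nat_diff)
      then have e: "24 * int (N - i) + 1 = (24 * int t + 1) + int p * (24 * (int n - int c))"
        by (simp add: algebra_simps)
      have "int p dvd int (24 * t + 1)" using assms(5) by (simp only: int_dvd_int_iff)
      then have "int p dvd 24 * int t + 1" by (simp add: add.commute)
      moreover have "int p dvd int p * (24 * (int n - int c))" by simp
      ultimately have "int p dvd 24 * int (N - i) + 1" unfolding e by (rule dvd_add)
      then have "pz p (GS $ (N - i))" by (rule GS_pz[OF p])
      moreover have "(?E2p * W) $ i \<in> \<int>" using iH unfolding intg_def by simp
      ultimately show ?thesis by (rule pz_Ints_mult[rotated])
    qed
  qed
  have "pz p (d (p - 2) N)" unfolding dN2 using pz_add[OF z1 z2] by simp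
  then show ?thesis unfolding pz_def N_def .
qed

end
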